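(* Let $M$ be as in the context, let $\Gamma_1,\Gamma_2$ be piecewise $C^1$ cuts, and let $\gamma_1,\gamma_2\in C_1(M;\mathbb Z_2)$ be singular 1-chains representing $\Gamma_1$ and $\Gamma_2$ respectively. Then $\gamma_1-\gamma_2$ is a relative 1-cycle (i.e. $\partial_1(\gamma_1-\gamma_2)\in C_0(\partial M;\mathbb Z_2)$) if and only if $\Gamma_{1,\mathrm{odd}}=\Gamma_{2,\mathrm{odd}}$.
   Context: $M$ is a compact oriented Riemannian surface with piecewise $C^1$ (possibly empty) boundary $\partial M$. A $C^1$ curve is regular if its velocity never vanishes. A closed set $\Gamma\subset M$ is a piecewise $C^1$ cut if it is the image of a finite set of regular $C^1$ curves that intersect one another (and $\partial M$) transversely, and only do so at their endpoints; the singular chain $\sum_a\gamma_a\in C_1(M;\mathbb Z_2)$ of such a family of curves is said to represent $\Gamma$. $\partial_1$ is the singular boundary map with $\mathbb Z_2$ coefficients. For a piecewise $C^1$ cut $\Gamma$, $\Gamma_{\mathrm{odd}}$ denotes the set of points in the interior of $M$ at which an odd number of the curves composing $\Gamma$ terminate. *)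

theory Defs
  imports "HOL-Analysis.Analysis" "HOL-Homology.Homology"
begin

definition half_plane :: "(real \<times> real) set" where
  "half_plane = {z. snd z \<ge> 0}"

definition surface_chart :: "'a::euclidean_space set \<Rightarrow> 'a set \<Rightarrow> ('a \<Rightarrow> real \<times> real) \<Rightarrow> bool" where
  "surface_chart M U \<phi> \<longleftrightarrow> openin (top_of_set M) U \<and>
     (\<exists>V \<psi>. openin (top_of_set half_plane) V \<and> homeomorphism U V \<phi> \<psi>)"

definition compact_surface_with_boundary :: "'a::euclidean_space set \<Rightarrow> bool" where
  "compact_surface_with_boundary M \<longleftrightarrow> compact M \<and>
     (\<forall>x\<in>M. \<exists>U \<phi>. x \<in> U \<and> surface_chart M U \<phi>)"

definition surface_boundary :: "'a::euclidean_space set \<Rightarrow> 'a set" where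
  "surface_boundary M = {x\<in>M. \<exists>U \<phi>. x \<in> U \<and> surface_chart M U \<phi> \<and> snd (\<phi> x) = 0}"

definition regular_C1_curve :: "(real \<Rightarrow> 'a::euclidean_space) \<Rightarrow> bool" where
  "regular_C1_curve g \<longleftrightarrow> (\<exists>g'. continuous_on {0..1} g' \<and>
     (\<forall>t\<in>{0..1}. (g has_vector_derivative g' t) (at t within {0..1}) \<and> g' t \<noteq> 0))"

definition velocity :: "(real \<Rightarrow> 'a::euclidean_space) \<Rightarrow> real \<Rightarrow> 'a" where
  "velocity g t = vector_derivative g (at t within {0..1})"

definition pw_C1_cut_family :: "'a::euclidean_space set \<Rightarrow> 'i set \<Rightarrow> ('i \<Rightarrow> real \<Rightarrow> 'a) \<Rightarrow> bool" where
  "pw_C1_cut_family M A \<gamma> \<longleftrightarrow> finite A \<and>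
     (\<forall>a\<in>A. regular_C1_curve (\<gamma> a) \<and> \<gamma> a ` {0..1} \<subseteq> M) \<and>
     (\<forall>a\<in>A. \<forall>t\<in>{0..1}. \<gamma> a t \<in> surface_boundary M \<longrightarrow> t \<in> {0,1}) \<and>
     (\<forall>a\<in>A. \<forall>b\<in>A. \<forall>s\<in>{0..1}. \<forall>t\<in>{0..1}. a \<noteq> b \<and> \<gamma> a s = \<gamma> b t \<longrightarrow>
         s \<in> {0,1} \<and> t \<in> {0,1} \<and> \<not> (\<exists>c. velocity (\<gamma> a) s = c *\<^sub>R velocity (\<gamma> b) t))"

definition cut_set :: "'i set \<Rightarrow> ('i \<Rightarrow> real \<Rightarrow> 'a) \<Rightarrow> 'a set" where
  "cut_set A \<gamma> = (\<Union>a\<in>A. \<gamma> a ` {0..1})"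

text \<open>A curve on [0,1] as a singular 1-simplex; boundary is g 1 - g 0.\<close>
definition curve_simplex :: "(real \<Rightarrow> 'a) \<Rightarrow> (nat \<Rightarrow> real) \<Rightarrow> 'a" where
  "curve_simplex g = restrict (\<lambda>x. g (x 1)) (standard_simplex 1)"

text \<open>The singular 1-chain sum_a gamma_a (integer lift; read mod 2).\<close>
definition cut_chain :: "'i set \<Rightarrow> ('i \<Rightarrow> real \<Rightarrow> 'a) \<Rightarrow> 'a chain" where
  "cut_chain A \<gamma> = (\<Sum>a\<in>A. frag_of (curve_simplex (\<gamma> a)))"

definition endpoint_count :: "'i set \<Rightarrow> ('i \<Rightarrow> real \<Rightarrow> 'a) \<Rightarrow> 'a \<Rightarrow> nat" where
  "endpoint_count A \<gamma> x = card {a\<in>A. \<gamma> a 0 = x} + card {a\<in>A. \<gamma> a 1 = x}"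

definition cut_odd :: "'a::euclidean_space set \<Rightarrow> 'i set \<Rightarrow> ('i \<Rightarrow> real \<Rightarrow> 'a) \<Rightarrow> 'a set" where
  "cut_odd M A \<gamma> = {x \<in> M - surface_boundary M. odd (endpoint_count A \<gamma> x)}"

text \<open>Z_2 chains: the integer chain c reduced mod 2 lies in C_p(X;Z_2).\<close>
definition z2_singular_chain :: "nat \<Rightarrow> 'a topology \<Rightarrow> 'a chain \<Rightarrow> bool" where
  "z2_singular_chain p X c \<longleftrightarrow> (\<forall>f. odd (Poly_Mapping.lookup c f) \<longrightarrow> singular_simplex p X f)"

definition z2_singular_relcycle :: "nat \<Rightarrow> 'a topology \<Rightarrow> 'a set \<Rightarrow> 'a chain \<Rightarrow> bool" where
  "z2_singular_relcycle p X S c \<longleftrightarrow> z2_singular_chain p X c \<and>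
     z2_singular_chain (p - 1) (subtopology X S) (chain_boundary p c)"

end

theory Submission
  imports Defs
begin

definition pt0 :: "'a \<Rightarrow> (nat \<Rightarrow> real) \<Rightarrow> 'a" where
  "pt0 x = restrict (\<lambda>_. x) (standard_simplex 0)"

lemma pt0_inj: "pt0 x = pt0 y \<Longrightarrow> x = y"
proof -
  assume h: "pt0 x = pt0 y"
  have e: "(\<lambda>j. if j = 0 then 1 else 0::real) \<in> standard_simplex 0"
    by (simp add: standard_simplex_0)
  have "pt0 x (\<lambda>j. if j = 0 then 1 else 0) = pt0 y (\<lambda>j. if j = 0 then 1 else 0)"
    using h by simp
  then show "x = y" using e unfolding pt0_def by simp
qed

lemma pt0_eq [simp]: "pt0 x = pt0 y \<longleftrightarrow> x = y"
proof
  assume "pt0 x = pt0 y"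
  then show "x = y" by (rule pt0_inj)
qed simp

lemma parity_aux: "odd ((int a - int b) - (int c - int d)) \<longleftrightarrow> odd (b + a + (d + c))"
proof -
  have "odd ((int a - int b) - (int c - int d)) \<longleftrightarrow> odd (int b + int a + (int d + int c))"
  proof -
    have "(int a - int b) - (int c - int d) = (int b + int a + (int d + int c)) - 2 * (int b + int c)"
      by simp
    then show ?thesis by (cases "even a"; cases "even b"; cases "even c"; cases "even d") simp_all
  qed
  also have "\<dots> \<longleftrightarrow> odd (b + a + (d + c))"
    by (metis even_of_nat_iff of_nat_add)
  finally show ?thesis .
qed

lemma face0: "singular_face 1 0 (curve_simplex g) = pt0 (g 1)"
proof
  fix y :: "nat \<Rightarrow> real"
  show "singular_face 1 0 (curve_simplex g) y = pt0 (g 1) y"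
  proof (cases "y \<in> standard_simplex 0")
    case True
    then have y: "y = (\<lambda>j. if j = 0 then 1 else 0)" by (simp add: standard_simplex_0)
    have "simplical_face 0 y \<in> standard_simplex 1"
      using simplical_face_in_standard_simplex[of 1 0 y] True by simp
    then show ?thesis using True
      by (simp add: singular_face_def curve_simplex_def pt0_def simplical_face_def y)
  next
    case False
    then show ?thesis by (simp add: singular_face_def pt0_def)
  qed
qed

lemma face1: "singular_face 1 1 (curve_simplex g) = pt0 (g 0)"
proof
  fix y :: "nat \<Rightarrow> real"
  show "singular_face 1 1 (curve_simplex g) y = pt0 (g 0) y"
  proof (cases "y \<in> standard_simplex 0")
    case True
    then have y: "y = (\<lambda>j. if j = 0 then 1 else 0)" by (simp add: standard_simplex_0)
    have "simplical_face 1 y \<in> standard_simplex 1"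
      using simplical_face_in_standard_simplex[of 1 1 y] True by simp
    then show ?thesis using True
      by (simp add: singular_face_def curve_simplex_def pt0_def simplical_face_def y)
  next
    case False
    then show ?thesis by (simp add: singular_face_def pt0_def)
  qed
qed

lemma bd_curve: "chain_boundary 1 (frag_of (curve_simplex g)) = frag_of (pt0 (g 1)) - frag_of (pt0 (g 0))"
  using face0[of g] face1[of g] by (simp add: chain_boundary_of)

lemma lookup_bd:
  assumes "finite A"
  shows "Poly_Mapping.lookup (chain_boundary 1 (cut_chain A \<gamma>)) (pt0 x)
     = int (card {a\<in>A. \<gamma> a 1 = x}) - int (card {a\<in>A. \<gamma> a 0 = x})"
proof -
  have "Poly_Mapping.lookup (chain_boundary 1 (cut_chain A \<gamma>)) (pt0 x)
     = (\<Sum>a\<in>A. (if \<gamma> a 1 = x then 1 else 0) - (if \<gamma> a 0 = x then 1 else 0))"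
    unfolding cut_chain_def chain_boundary_sum lookup_sum
    by (intro sum.cong) (simp_all add: lookup_minus bd_curve[simplified])
  also have "\<dots> = int (card {a\<in>A. \<gamma> a 1 = x}) - int (card {a\<in>A. \<gamma> a 0 = x})"
    using assms by (simp add: sum_subtractf sum.If_cases Int_def conj_commute)
  finally show ?thesis .
qed

lemma curve_singular:
  assumes "regular_C1_curve g" "g ` {0..1} \<subseteq> M"
  shows "singular_simplex 1 (top_of_set M) (curve_simplex g)"
proof -
  have cg: "continuous_on {0..1} g"
  proof -
    obtain g' where "\<forall>t\<in>{0..1}. (g has_vector_derivative g' t) (at t within {0..1})"
      using assms(1) unfolding regular_C1_curve_def by blast
    then show ?thesis
      by (meson continuous_on_eq_continuous_within has_vector_derivative_continuous)
  qed
  have c1: "continuous_map (subtopology (powertop_real UNIV) (standard_simplex 1)) (top_of_set {0..1::real}) (\<lambda>x. x 1)"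
    unfolding continuous_map_in_subtopology
    using standard_simplex_01[of 1]
    by (auto intro!: continuous_map_from_subtopology continuous_map_product_projection simp: PiE_iff)
  have c2: "continuous_map (top_of_set {0..1::real}) (top_of_set M) g"
    using cg assms(2) by (simp add: continuous_map_in_subtopology image_subset_iff Pi_iff)
  have "continuous_map (subtopology (powertop_real UNIV) (standard_simplex 1)) (top_of_set M) (\<lambda>x. g (x 1))"
    using continuous_map_compose[OF c1 c2] by (simp add: o_def)
  then have "continuous_map (subtopology (powertop_real UNIV) (standard_simplex 1)) (top_of_set M) (curve_simplex g)"
    unfolding curve_simplex_def by (rule continuous_map_eq) simp
  then show ?thesis
    unfolding singular_simplex_def curve_simplex_def by simp
qed

lemma cut_chain_singular:
  assumes "pw_C1_cut_family M A \<gamma>"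
  shows "singular_chain 1 (top_of_set M) (cut_chain A \<gamma>)"
  using assms unfolding cut_chain_def pw_C1_cut_family_def
  by (auto intro!: singular_chain_sum simp: singular_chain_of curve_singular[simplified])

theorem lemma3p8:
  fixes M :: "'a::euclidean_space set"
    and A :: "'i set" and \<gamma>1 :: "'i \<Rightarrow> real \<Rightarrow> 'a"
    and B :: "'j set" and \<gamma>2 :: "'j \<Rightarrow> real \<Rightarrow> 'a"
  assumes "compact_surface_with_boundary M"
    and "pw_C1_cut_family M A \<gamma>1"
    and "pw_C1_cut_family M B \<gamma>2"
  shows "z2_singular_relcycle 1 (top_of_set M) (surface_boundary M)
           (cut_chain A \<gamma>1 - cut_chain B \<gamma>2)
         \<longleftrightarrow> cut_odd M A \<gamma>1 = cut_odd M B \<gamma>2"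
proof -
  let ?c = "cut_chain A \<gamma>1 - cut_chain B \<gamma>2"
  let ?d = "chain_boundary 1 ?c"
  have fA: "finite A" and fB: "finite B"
    using assms(2,3) by (auto simp: pw_C1_cut_family_def)
  have sc: "singular_chain 1 (top_of_set M) ?c"
    by (intro singular_chain_diff cut_chain_singular assms)
  have z1: "z2_singular_chain 1 (top_of_set M) ?c"
    unfolding z2_singular_chain_def
  proof (intro allI impI)
    fix f assume "odd (Poly_Mapping.lookup ?c f)"
    then have "f \<in> Poly_Mapping.keys ?c" by (auto simp: in_keys_iff)
    then show "singular_simplex 1 (top_of_set M) f" using sc by (auto simp: singular_chain_def)
  qed
  have sd: "singular_chain 0 (top_of_set M) ?d"
    using singular_chain_boundary[OF sc] by simp
  have lk: "odd (Poly_Mapping.lookup ?d (pt0 x)) \<longleftrightarrow>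
      odd (endpoint_count A \<gamma>1 x + endpoint_count B \<gamma>2 x)" for x
  proof -
    have "Poly_Mapping.lookup ?d (pt0 x) =
      (int (card {a\<in>A. \<gamma>1 a 1 = x}) - int (card {a\<in>A. \<gamma>1 a 0 = x}))
      - (int (card {a\<in>B. \<gamma>2 a 1 = x}) - int (card {a\<in>B. \<gamma>2 a 0 = x}))"
      by (simp add: chain_boundary_diff lookup_minus lookup_bd[simplified] fA fB)
    then show ?thesis
      unfolding endpoint_count_def by (simp only: parity_aux)
  qed
  show ?thesis
  proof
    assume R: "z2_singular_relcycle 1 (top_of_set M) (surface_boundary M) ?c"
    have "x \<in> M - surface_boundary M \<Longrightarrow> odd (endpoint_count A \<gamma>1 x) \<longleftrightarrow> odd (endpoint_count B \<gamma>2 x)" for x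
    proof -
      assume x: "x \<in> M - surface_boundary M"
      have "\<not> odd (Poly_Mapping.lookup ?d (pt0 x))"
      proof
        assume "odd (Poly_Mapping.lookup ?d (pt0 x))"
        then have "singular_simplex 0 (subtopology (top_of_set M) (surface_boundary M)) (pt0 x)"
          using R unfolding z2_singular_relcycle_def z2_singular_chain_def by simp
        then have "pt0 x ` standard_simplex 0 \<subseteq> surface_boundary M"
          by (simp add: singular_simplex_subtopology)
        then show False using x by (simp add: pt0_def standard_simplex_0)
      qed
      then show ?thesis using lk[of x] by (simp add: even_add)
    qed
    then show "cut_odd M A \<gamma>1 = cut_odd M B \<gamma>2"
      unfolding cut_odd_def by auto
  next
    assume E: "cut_odd M A \<gamma>1 = cut_odd M B \<gamma>2"
    have "z2_singular_chain 0 (subtopology (top_of_set M) (surface_boundary M)) ?d"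
      unfolding z2_singular_chain_def
    proof (intro allI impI)
      fix f assume o: "odd (Poly_Mapping.lookup ?d f)"
      then have "f \<in> Poly_Mapping.keys ?d" by (auto simp: in_keys_iff)
      then have sf: "singular_simplex 0 (top_of_set M) f" using sd by (auto simp: singular_chain_def)
      define e :: "nat \<Rightarrow> real" where "e = (\<lambda>j. if j = 0 then 1 else 0)"
      have f0: "f = pt0 (f e)"
        using sf unfolding singular_simplex_def pt0_def
        by (auto simp: standard_simplex_0 e_def extensional_def)
      have fe0: "f e \<in> M"
        using sf unfolding singular_simplex_def continuous_map_def
        by (auto simp: standard_simplex_0 e_def)
      obtain p where f: "f = pt0 p" and fe: "p \<in> M"
        using f0 fe0 by blast
      have "odd (Poly_Mapping.lookup ?d (pt0 p))"
        using o unfolding f .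
      then have "odd (endpoint_count A \<gamma>1 p + endpoint_count B \<gamma>2 p)"
        using lk by blast
      then have "p \<in> surface_boundary M"
        using E fe unfolding cut_odd_def by (auto simp: set_eq_iff even_add)
      then show "singular_simplex 0 (subtopology (top_of_set M) (surface_boundary M)) f"
        using sf unfolding f by (simp add: singular_simplex_subtopology standard_simplex_0 pt0_def)
    qed
    then show "z2_singular_relcycle 1 (top_of_set M) (surface_boundary M) ?c"
      using z1 by (simp add: z2_singular_relcycle_def)
  qed
qed

end
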